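(* Let $A$ be a commutative ring. Assume that the maximal spectrum $\mathrm{Max}(A)$ is a Noetherian topological space and that $\dim \mathrm{Max}(A)\le d-2$. Then $A$ satisfies the absolute flexible stable rank condition $\mathrm{AFSR}_d$.
   Context: Here $\dim\mathrm{Max}(A)$ is the dimension of the maximal spectrum of $A$, i.e. the supremum of the lengths of chains of prime ideals each of which coincides with its Jacobson radical (an intersection of maximal ideals). A commutative ring $A$ satisfies $\mathrm{AFSR}_d$ if for any row $(b_1,\ldots,b_d)$ with coordinates in $A$, there exists $c_1\in A$ such that for any invertible $\varepsilon_1\in A^*$ there exists $c_2\in A$ such that for any $\varepsilon_2\in A^*$, $\ldots$, there exists $c_{d-1}\in A$ such that for any $\varepsilon_{d-1}\in A^*$, every maximal ideal of $A$ containing the ideal $\langle b_1+\varepsilon_1c_1b_d,\ldots,b_{d-1}+\varepsilon_{d-1}c_{d-1}b_d\rangle$ already contains the ideal $\langle b_1,\ldots,b_d\rangle$. *)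

theory Defs
  imports "HOL-Algebra.Algebra"
begin

definition MaxSpec :: "('a, 'b) ring_scheme \<Rightarrow> 'a set set" where
  "MaxSpec R = {m. maximalideal m R}"

(* Closed subsets of Max(A) in the Zariski topology: V(S) \<inter> Max(A) for S \<subseteq> A *)
definition max_closed :: "('a, 'b) ring_scheme \<Rightarrow> 'a set set \<Rightarrow> bool" where
  "max_closed R C \<longleftrightarrow> (\<exists>S \<subseteq> carrier R. C = {m \<in> MaxSpec R. S \<subseteq> m})"

definition max_noetherian :: "('a, 'b) ring_scheme \<Rightarrow> bool" where
  "max_noetherian R \<longleftrightarrow>
     (\<forall>C :: nat \<Rightarrow> 'a set set. (\<forall>n. max_closed R (C n)) \<and> (\<forall>n. C (Suc n) \<subseteq> C n)
        \<longrightarrow> (\<exists>N. \<forall>n\<ge>N. C n = C N))"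

definition jacobson_rad :: "('a, 'b) ring_scheme \<Rightarrow> 'a set \<Rightarrow> 'a set" where
  "jacobson_rad R I = carrier R \<inter> \<Inter>{m \<in> MaxSpec R. I \<subseteq> m}"

(* prime ideals coinciding with their Jacobson radical (= irreducible closed subsets of Max) *)
definition j_prime :: "('a, 'b) ring_scheme \<Rightarrow> 'a set \<Rightarrow> bool" where
  "j_prime R p \<longleftrightarrow> primeideal p R \<and> jacobson_rad R p = p"

definition dim_max_le :: "('a, 'b) ring_scheme \<Rightarrow> int \<Rightarrow> bool" where
  "dim_max_le R k \<longleftrightarrow>
     (\<forall>(p :: nat \<Rightarrow> 'a set) (n :: nat).
        (\<forall>i\<le>n. j_prime R (p i)) \<and> (\<forall>i<n. p i \<subset> p (Suc i)) \<longrightarrow> int n \<le> k)"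

(* The alternating game in AFSR_d. Row b = (b 0, ..., b (d-1)), so b_d is b (d-1).
   xs collects b_i + eps_i c_i b_d for the steps already played. *)
fun afsr_game :: "('a, 'b) ring_scheme \<Rightarrow> nat \<Rightarrow> (nat \<Rightarrow> 'a) \<Rightarrow> nat \<Rightarrow> 'a list \<Rightarrow> bool" where
  "afsr_game R d b 0 xs =
     (\<forall>m. maximalideal m R \<longrightarrow> Idl\<^bsub>R\<^esub> (set xs) \<subseteq> m \<longrightarrow> Idl\<^bsub>R\<^esub> (b ` {..<d}) \<subseteq> m)"
| "afsr_game R d b (Suc k) xs =
     (\<exists>c \<in> carrier R. \<forall>e \<in> Units R.
        afsr_game R d b k (xs @ [b (length xs) \<oplus>\<^bsub>R\<^esub> e \<otimes>\<^bsub>R\<^esub> c \<otimes>\<^bsub>R\<^esub> b (d - 1)]))"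

definition AFSR :: "('a, 'b) ring_scheme \<Rightarrow> nat \<Rightarrow> bool" where
  "AFSR R d \<longleftrightarrow> (\<forall>b. (\<forall>i<d. b i \<in> carrier R) \<longrightarrow> afsr_game R d b (d - 1) [])"

end

theory Submission
  imports Defs
begin

definition chain_below :: "('a, 'b) ring_scheme \<Rightarrow> 'a set \<Rightarrow> nat \<Rightarrow> bool" where
  "chain_below R q n \<longleftrightarrow> (\<exists>p. (\<forall>i\<le>n. j_prime R (p i)) \<and> (\<forall>i<n. p i \<subset> p (Suc i)) \<and> p n = q)"

definition game_inv :: "('a, 'b) ring_scheme \<Rightarrow> nat \<Rightarrow> (nat \<Rightarrow> 'a) \<Rightarrow> 'a list \<Rightarrow> bool" where
  "game_inv R d b xs \<longleftrightarrow> set xs \<subseteq> carrier R \<and>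
     (\<forall>j<length xs. \<exists>y\<in>carrier R. xs ! j = b j \<oplus>\<^bsub>R\<^esub> y \<otimes>\<^bsub>R\<^esub> b (d - 1)) \<and>
     (\<forall>q. j_prime R q \<and> set xs \<subseteq> q \<and> b (d - 1) \<notin> q \<longrightarrow> chain_below R q (length xs))"

context cring begin

lemma ideal_sum_cancel:
  assumes "ideal I R" "a \<in> carrier R" "b \<in> carrier R" "b \<in> I" "a \<oplus> b \<in> I"
  shows "a \<in> I"
proof -
  have "a = (a \<oplus> b) \<ominus> b" using assms by (simp add: a_minus_def a_assoc r_neg)
  also have "\<dots> \<in> I" using assms by (simp add: ideal.axioms(1) additive_subgroup.a_closed additive_subgroup.a_inv_closed a_minus_def)
  finally show ?thesis .
qed

lemma max_jprime:
  assumes "maximalideal m R"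
  shows "j_prime R m"
proof -
  have "m \<subseteq> carrier R" using assms maximalideal.axioms(1) ideal.axioms(1) additive_subgroup.a_subset by blast
  moreover have "m \<in> {m' \<in> MaxSpec R. m \<subseteq> m'}" using assms by (simp add: MaxSpec_def)
  ultimately have "jacobson_rad R m = m" unfolding jacobson_rad_def by blast
  then show ?thesis using assms maximalideal_prime by (simp add: j_prime_def)
qed

lemma prime_one_notin:
  assumes "primeideal q R"
  shows "\<one> \<notin> q"
  using assms primeideal.axioms(1) primeideal.I_notcarr ideal.one_imp_carrier by metis

lemma avoid:
  assumes "finite G" "\<forall>p\<in>G. ideal p R" "primeideal q R" "\<forall>p\<in>G. \<not> p \<subseteq> q"
  shows "\<exists>x\<in>carrier R. (\<forall>p\<in>G. x \<in> p) \<and> x \<notin> q"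
  using assms
proof (induction G rule: finite_induct)
  case empty
  then show ?case using prime_one_notin by auto
next
  case (insert p G)
  then obtain x where x: "x \<in> carrier R" "\<forall>p\<in>G. x \<in> p" "x \<notin> q" by auto
  from insert.prems obtain z where z: "z \<in> p" "z \<notin> q" by auto
  have idp: "ideal p R" using insert.prems by simp
  have zc: "z \<in> carrier R" using ideal.Icarr[OF idp z(1)] .
  have "\<forall>p'\<in>G. x \<otimes> z \<in> p'"
  proof
    fix p' assume "p' \<in> G"
    then show "x \<otimes> z \<in> p'" using x(2) zc insert.prems(1) ideal.I_r_closed[of p' R x z] by simp
  qed
  moreover have "x \<otimes> z \<in> p" using ideal.I_l_closed[OF idp z(1) x(1)] .
  moreover have "x \<otimes> z \<notin> q" using primeideal.I_prime[OF insert.prems(2) x(1) zc] x(3) z(2) by blast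
  ultimately show ?case using x(1) zc by (intro bexI[of _ "x \<otimes> z"]) auto
qed

lemma jprime_eq:
  assumes "j_prime R p"
  shows "carrier R \<inter> \<Inter>{m \<in> MaxSpec R. p \<subseteq> m} = p"
  using assms by (simp add: j_prime_def jacobson_rad_def)

lemma cover:
  assumes "j_prime R q" "finite F" "\<forall>p\<in>F. j_prime R p"
    and "{m \<in> MaxSpec R. q \<subseteq> m} \<subseteq> (\<Union>p\<in>F. {m \<in> MaxSpec R. p \<subseteq> m})"
  shows "\<exists>p\<in>F. p \<subseteq> q"
proof (rule ccontr)
  assume "\<not> ?thesis"
  moreover have "primeideal q R" using assms(1) by (simp add: j_prime_def)
  moreover have "\<forall>p\<in>F. ideal p R" using assms(3) by (simp add: j_prime_def primeideal.axioms(1))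
  ultimately obtain x where x: "x \<in> carrier R" "\<forall>p\<in>F. x \<in> p" "x \<notin> q"
    using avoid[OF assms(2)] by metis
  have "x \<in> m" if m: "m \<in> {m \<in> MaxSpec R. q \<subseteq> m}" for m
  proof -
    from m assms(4) have "m \<in> (\<Union>p\<in>F. {m \<in> MaxSpec R. p \<subseteq> m})" by (rule subsetD[rotated])
    then obtain p where "p \<in> F" "p \<subseteq> m" by blast
    then show ?thesis using x(2) by blast
  qed
  then have "x \<in> carrier R \<inter> \<Inter>{m \<in> MaxSpec R. q \<subseteq> m}" using x(1) by blast
  then show False using jprime_eq[OF assms(1)] x by auto
qed

lemma wf_closed:
  assumes "max_noetherian R"
  shows "wf {(C', C). max_closed R C' \<and> max_closed R C \<and> C' \<subset> C}" (is "wf ?r")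
  unfolding wf_iff_no_infinite_down_chain
proof
  assume "\<exists>f. \<forall>i. (f (Suc i), f i) \<in> ?r"
  then obtain f where f: "\<forall>i. (f (Suc i), f i) \<in> ?r" by (rule exE)
  have f1: "\<forall>n. max_closed R (f n)" using f by simp
  have f2: "\<forall>n. f (Suc n) \<subset> f n" using f by simp
  have "\<forall>C :: nat \<Rightarrow> 'a set set. (\<forall>n. max_closed R (C n)) \<and> (\<forall>n. C (Suc n) \<subseteq> C n)
        \<longrightarrow> (\<exists>N. \<forall>n\<ge>N. C n = C N)" using assms unfolding max_noetherian_def .
  then have "(\<forall>n. max_closed R (f n)) \<and> (\<forall>n. f (Suc n) \<subseteq> f n) \<longrightarrow> (\<exists>N. \<forall>n\<ge>N. f n = f N)"
    by (rule spec)
  moreover have "\<forall>n. f (Suc n) \<subseteq> f n" using f2 by auto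
  ultimately obtain N where "\<forall>n\<ge>N. f n = f N" using f1 by blast
  hence eq: "f (Suc N) = f N" using le_Suc_eq by blast
  have "f (Suc N) \<subset> f N" using f2 by (rule spec)
  then show False using eq by simp
qed

lemma decomp:
  assumes "max_noetherian R" "max_closed R C"
  shows "\<exists>F. finite F \<and> (\<forall>p\<in>F. j_prime R p) \<and> C = (\<Union>p\<in>F. {m \<in> MaxSpec R. p \<subseteq> m})"
  using assms(2)
proof (induction C rule: wf_induct[OF wf_closed[OF assms(1)]])
  case (1 C)
  obtain S where S: "S \<subseteq> carrier R" "C = {m \<in> MaxSpec R. S \<subseteq> m}"
    using "1.prems" unfolding max_closed_def by blast
  show ?case
  proof (cases "C = {}")
    case True
    then show ?thesis by (intro exI[of _ "{}"]) auto
  next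
    case False
    define J where "J = carrier R \<inter> \<Inter>C"
    have Cmax: "\<And>m. m \<in> C \<Longrightarrow> maximalideal m R" using S by (auto simp: MaxSpec_def)
    have idJ: "ideal J R"
    proof -
      have "ideal (\<Inter>(insert (carrier R) C)) R"
        by (rule i_Intersect) (auto simp: oneideal Cmax maximalideal.axioms(1))
      then show ?thesis by (simp add: J_def)
    qed
    have SJ: "S \<subseteq> J" using S by (auto simp: J_def)
    have VJ: "{m \<in> MaxSpec R. J \<subseteq> m} = C"
    proof
      show "{m \<in> MaxSpec R. J \<subseteq> m} \<subseteq> C" using SJ S by auto
      show "C \<subseteq> {m \<in> MaxSpec R. J \<subseteq> m}" using S by (auto simp: J_def)
    qed
    obtain m0 where m0: "m0 \<in> C" using False by blast
    have one: "\<one> \<notin> J"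
    proof
      assume "\<one> \<in> J"
      then have "\<one> \<in> m0" using m0 by (auto simp: J_def)
      then show False using Cmax[OF m0] maximalideal_prime prime_one_notin by blast
    qed
    show ?thesis
    proof (cases "primeideal J R")
      case True
      have "jacobson_rad R J = J" unfolding jacobson_rad_def VJ by (simp add: J_def)
      then have "j_prime R J" using True by (simp add: j_prime_def)
      then show ?thesis using VJ by (intro exI[of _ "{J}"]) auto
    next
      case False
      have "carrier R \<noteq> J" using one by auto
      have "\<not> (\<forall>a b. a \<in> carrier R \<longrightarrow> b \<in> carrier R \<longrightarrow> a \<otimes> b \<in> J \<longrightarrow> a \<in> J \<or> b \<in> J)"
      proof
        assume H: "\<forall>a b. a \<in> carrier R \<longrightarrow> b \<in> carrier R \<longrightarrow> a \<otimes> b \<in> J \<longrightarrow> a \<in> J \<or> b \<in> J"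
        have "primeideal J R"
          by (rule primeidealI[OF idJ is_cring \<open>carrier R \<noteq> J\<close>]) (use H in blast)
        then show False using False by simp
      qed
      then obtain a b where ab: "a \<in> carrier R" "b \<in> carrier R" "a \<otimes> b \<in> J" "a \<notin> J" "b \<notin> J"
        by blast
      obtain ma where ma: "ma \<in> C" "a \<notin> ma" using ab(1,4) by (auto simp: J_def)
      obtain mb where mb: "mb \<in> C" "b \<notin> mb" using ab(2,5) by (auto simp: J_def)
      define C1 where "C1 = {m \<in> MaxSpec R. S \<union> {a} \<subseteq> m}"
      define C2 where "C2 = {m \<in> MaxSpec R. S \<union> {b} \<subseteq> m}"
      have cl1: "max_closed R C1" unfolding max_closed_def C1_def using S ab by blast
      have cl2: "max_closed R C2" unfolding max_closed_def C2_def using S ab by blast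
      have "C1 \<subseteq> C" using S by (auto simp: C1_def)
      moreover have "ma \<notin> C1" using ma by (simp add: C1_def)
      ultimately have "C1 \<subset> C" using ma by blast
      then have "(C1, C) \<in> {(C', C). max_closed R C' \<and> max_closed R C \<and> C' \<subset> C}"
        using cl1 "1.prems" by simp
      from "1.IH"[rule_format, OF this cl1] obtain F1 where
        F1: "finite F1" "\<forall>p\<in>F1. j_prime R p" "C1 = (\<Union>p\<in>F1. {m \<in> MaxSpec R. p \<subseteq> m})" by (elim exE conjE)
      have "C2 \<subseteq> C" using S by (auto simp: C2_def)
      moreover have "mb \<notin> C2" using mb by (simp add: C2_def)
      ultimately have "C2 \<subset> C" using mb by blast
      then have "(C2, C) \<in> {(C', C). max_closed R C' \<and> max_closed R C \<and> C' \<subset> C}"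
        using cl2 "1.prems" by simp
      from "1.IH"[rule_format, OF this cl2] obtain F2 where
        F2: "finite F2" "\<forall>p\<in>F2. j_prime R p" "C2 = (\<Union>p\<in>F2. {m \<in> MaxSpec R. p \<subseteq> m})" by (elim exE conjE)
      have "C = C1 \<union> C2"
      proof
        show "C1 \<union> C2 \<subseteq> C" using S by (auto simp: C1_def C2_def)
        show "C \<subseteq> C1 \<union> C2"
        proof
          fix m assume m: "m \<in> C"
          have "a \<otimes> b \<in> m" using ab m by (auto simp: J_def)
          then have "a \<in> m \<or> b \<in> m"
            using primeideal.I_prime[OF maximalideal_prime[OF Cmax[OF m]]] ab by blast
          then show "m \<in> C1 \<union> C2" using m S by (auto simp: C1_def C2_def)
        qed
      qed
      then show ?thesis using F1 F2 by (intro exI[of _ "F1 \<union> F2"]) auto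
    qed
  qed
qed

lemma select:
  assumes "finite P" "\<forall>p\<in>P. ideal p R"
    and "\<forall>k\<in>P. \<exists>y\<in>carrier R. y \<notin> k \<and> (\<forall>p\<in>P - {k}. y \<in> p)"
    and "T \<subseteq> P"
  shows "\<exists>c\<in>carrier R. \<forall>p\<in>P. (c \<in> p \<longleftrightarrow> p \<notin> T)"
proof -
  have "finite T" using assms(1,4) finite_subset by blast
  then show ?thesis using assms(4)
  proof (induction T rule: finite_induct)
    case empty
    then show ?case using assms(2) by (auto intro!: bexI[of _ "\<zero>"] simp: ideal.axioms(1) additive_subgroup.zero_closed)
  next
    case (insert k T)
    then obtain c where c: "c \<in> carrier R" "\<forall>p\<in>P. (c \<in> p \<longleftrightarrow> p \<notin> T)" by auto
    have kP: "k \<in> P" using insert by auto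
    obtain y where y: "y \<in> carrier R" "y \<notin> k" "\<forall>p\<in>P - {k}. y \<in> p" using assms(3) kP by blast
    have "\<forall>p\<in>P. (c \<oplus> y \<in> p \<longleftrightarrow> p \<notin> insert k T)"
    proof
      fix p assume pP: "p \<in> P"
      show "(c \<oplus> y \<in> p \<longleftrightarrow> p \<notin> insert k T)"
      proof (cases "p = k")
        case True
        have "c \<in> k" using c kP insert by auto
        moreover have "c \<oplus> y \<notin> k"
        proof
          assume "c \<oplus> y \<in> k"
          then have "y \<oplus> c \<in> k" using c y by (simp add: a_comm)
          then have "y \<in> k" using ideal_sum_cancel[of k y c] assms(2) kP c y \<open>c \<in> k\<close> by blast
          then show False using y by auto
        qed
        ultimately show ?thesis using True by auto
      next
        case False
        have yp: "y \<in> p" using y pP False by auto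
        have "c \<oplus> y \<in> p \<longleftrightarrow> c \<in> p"
        proof
          assume "c \<oplus> y \<in> p" then show "c \<in> p" using ideal_sum_cancel[of p c y] assms(2) pP c y yp by blast
        next
          assume "c \<in> p" then show "c \<oplus> y \<in> p"
            using assms(2) pP yp by (simp add: ideal.axioms(1) additive_subgroup.a_closed)
        qed
        then show ?thesis using c pP False by auto
      qed
    qed
    then show ?case using c y by blast
  qed
qed

lemma game:
  assumes noeth: "max_noetherian R" and dim: "dim_max_le R (int d - 2)"
    and bc: "\<forall>i<d. b i \<in> carrier R"
  shows "length xs + k = d - 1 \<Longrightarrow> game_inv R d b xs \<Longrightarrow> afsr_game R d b k xs"
proof (induction k arbitrary: xs)
  case 0
  have xsc: "set xs \<subseteq> carrier R"
    and xsb: "\<forall>j<length xs. \<exists>y\<in>carrier R. xs ! j = b j \<oplus> y \<otimes> b (d - 1)"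
    and xsq: "\<forall>q. j_prime R q \<and> set xs \<subseteq> q \<and> b (d - 1) \<notin> q \<longrightarrow> chain_below R q (length xs)"
    using "0.prems"(2) unfolding game_inv_def by blast+
  show ?case unfolding afsr_game.simps
  proof (intro allI impI)
    fix m assume mm: "maximalideal m R" and sub: "Idl (set xs) \<subseteq> m"
    have idm: "ideal m R" using mm maximalideal.axioms(1) by blast
    have xm: "set xs \<subseteq> m" using genideal_self[OF xsc] sub by blast
    have "b ` {..<d} \<subseteq> m"
    proof (cases "d = 0")
      case True then show ?thesis by simp
    next
      case False
      have blc: "b (d - 1) \<in> carrier R" using bc False by simp
      have blm: "b (d - 1) \<in> m"
      proof (rule ccontr)
        assume nm: "b (d - 1) \<notin> m"
        have "chain_below R m (length xs)" using xsq max_jprime[OF mm] xm nm by blast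
        then obtain p where p: "\<forall>i\<le>length xs. j_prime R (p i)" "\<forall>i<length xs. p i \<subset> p (Suc i)"
          unfolding chain_below_def by blast
        then have "int (length xs) \<le> int d - 2" using dim unfolding dim_max_le_def by blast
        then show False using "0.prems"(1) False by simp
      qed
      show ?thesis
      proof
        fix z assume "z \<in> b ` {..<d}"
        then obtain j where j: "j < d" "z = b j" by blast
        show "z \<in> m"
        proof (cases "j = d - 1")
          case True then show ?thesis using blm j by simp
        next
          case False
          then have jl: "j < length xs" using j "0.prems"(1) by simp
          obtain y where y: "y \<in> carrier R" "xs ! j = b j \<oplus> y \<otimes> b (d - 1)" using xsb jl by blast
          have "xs ! j \<in> m" using xm jl nth_mem by blast
          moreover have "y \<otimes> b (d - 1) \<in> m" using ideal.I_l_closed[OF idm blm y(1)] .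
          ultimately have "b j \<in> m" using ideal_sum_cancel[OF idm, of "b j" "y \<otimes> b (d - 1)"] y bc j blc by simp
          then show ?thesis using j by simp
        qed
      qed
    qed
    then show "Idl (b ` {..<d}) \<subseteq> m" using genideal_minimal[OF idm] by blast
  qed
next
  case (Suc k)
  have xsc: "set xs \<subseteq> carrier R"
    and xsb: "\<forall>j<length xs. \<exists>y\<in>carrier R. xs ! j = b j \<oplus> y \<otimes> b (d - 1)"
    and xsq: "\<forall>q. j_prime R q \<and> set xs \<subseteq> q \<and> b (d - 1) \<notin> q \<longrightarrow> chain_below R q (length xs)"
    using Suc.prems(2) unfolding game_inv_def by blast+
  have il: "length xs < d - 1" using Suc.prems(1) by simp
  have blc: "b (d - 1) \<in> carrier R" using bc il by simp
  have bic: "b (length xs) \<in> carrier R" using bc il by simp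
  have "max_closed R {m \<in> MaxSpec R. set xs \<subseteq> m}" unfolding max_closed_def using xsc by blast
  from decomp[OF noeth this] obtain F where F: "finite F" "\<forall>p\<in>F. j_prime R p"
    "{m \<in> MaxSpec R. set xs \<subseteq> m} = (\<Union>p\<in>F. {m \<in> MaxSpec R. p \<subseteq> m})" by blast
  define P where "P = {p \<in> F. (\<forall>p'\<in>F. p' \<subseteq> p \<longrightarrow> p' = p) \<and> b (d - 1) \<notin> p}"
  have PF: "P \<subseteq> F" unfolding P_def by blast
  have finP: "finite P" using PF F(1) finite_subset by blast
  have Pj: "\<forall>p\<in>P. j_prime R p" using PF F(2) by blast
  have Pid: "\<forall>p\<in>P. ideal p R" using Pj by (simp add: j_prime_def primeideal.axioms(1))
  have Pbl: "\<forall>p\<in>P. b (d - 1) \<notin> p" unfolding P_def by blast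
  have Pmin: "\<forall>p\<in>P. \<forall>p'\<in>F. p' \<subseteq> p \<longrightarrow> p' = p" unfolding P_def by blast
  have Pxs: "\<forall>p\<in>P. set xs \<subseteq> p"
  proof
    fix p assume pP: "p \<in> P"
    have "set xs \<subseteq> m" if "m \<in> {m \<in> MaxSpec R. p \<subseteq> m}" for m
    proof -
      have "m \<in> (\<Union>p\<in>F. {m \<in> MaxSpec R. p \<subseteq> m})" using that pP PF by blast
      then have "m \<in> {m \<in> MaxSpec R. set xs \<subseteq> m}" using F(3) by simp
      then show ?thesis by simp
    qed
    then have "set xs \<subseteq> carrier R \<inter> \<Inter>{m \<in> MaxSpec R. p \<subseteq> m}" using xsc by blast
    then show "set xs \<subseteq> p" using jprime_eq Pj pP by metis
  qed
  have covP: "\<exists>p\<in>P. p \<subseteq> q" if q: "j_prime R q" "set xs \<subseteq> q" "b (d - 1) \<notin> q" for q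
  proof -
    have "{m \<in> MaxSpec R. q \<subseteq> m} \<subseteq> {m \<in> MaxSpec R. set xs \<subseteq> m}" using q(2) by blast
    then have "{m \<in> MaxSpec R. q \<subseteq> m} \<subseteq> (\<Union>p\<in>F. {m \<in> MaxSpec R. p \<subseteq> m})" using F(3) by simp
    from cover[OF q(1) F(1) F(2) this] obtain p0 where p0: "p0 \<in> F" "p0 \<subseteq> q" by blast
    define A where "A = {p' \<in> F. p' \<subseteq> q}"
    have "finite A" using F(1) unfolding A_def by simp
    moreover have "A \<noteq> {}" using p0 unfolding A_def by blast
    ultimately obtain p1 where p1: "p1 \<in> A" "\<forall>b\<in>A. b \<le> p1 \<longrightarrow> p1 = b"
      using finite_has_minimal by blast
    have "p1 \<in> P"
    proof -
      have "p1 \<in> F" "p1 \<subseteq> q" using p1(1) unfolding A_def by auto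
      moreover have "\<forall>p'\<in>F. p' \<subseteq> p1 \<longrightarrow> p' = p1"
      proof (intro ballI impI)
        fix p' assume "p' \<in> F" "p' \<subseteq> p1"
        then have "p' \<in> A" using \<open>p1 \<subseteq> q\<close> unfolding A_def by auto
        then show "p' = p1" using p1(2) \<open>p' \<subseteq> p1\<close> by auto
      qed
      moreover have "b (d - 1) \<notin> p1" using \<open>p1 \<subseteq> q\<close> q(3) by blast
      ultimately show ?thesis unfolding P_def by blast
    qed
    then show ?thesis using p1(1) unfolding A_def by blast
  qed
  have ys: "\<forall>k\<in>P. \<exists>y\<in>carrier R. y \<notin> k \<and> (\<forall>p\<in>P - {k}. y \<in> p)"
  proof
    fix k assume kP: "k \<in> P"
    have pk: "primeideal k R" using Pj kP by (simp add: j_prime_def)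
    have "\<forall>p\<in>P - {k}. \<not> p \<subseteq> k" using Pmin kP PF by blast
    moreover have "finite (P - {k})" using finP by simp
    moreover have "\<forall>p\<in>P - {k}. ideal p R" using Pid by blast
    ultimately obtain x where "x \<in> carrier R" "\<forall>p\<in>P - {k}. x \<in> p" "x \<notin> k"
      using avoid[OF _ _ pk] by metis
    then show "\<exists>y\<in>carrier R. y \<notin> k \<and> (\<forall>p\<in>P - {k}. y \<in> p)" by blast
  qed
  obtain c where c: "c \<in> carrier R" "\<forall>p\<in>P. (c \<in> p \<longleftrightarrow> p \<notin> {p \<in> P. b (length xs) \<in> p})"
    using select[OF finP Pid ys, of "{p \<in> P. b (length xs) \<in> p}"] by blast
  show ?case unfolding afsr_game.simps
  proof (intro bexI[of _ c] ballI)
    fix e assume e: "e \<in> Units R"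
    have ec: "e \<in> carrier R" using e by (rule Units_closed)
    define x where "x = b (length xs) \<oplus> e \<otimes> c \<otimes> b (d - 1)"
    have xc: "x \<in> carrier R" unfolding x_def using bic ec c(1) blc by simp
    have xnot: "x \<notin> p" if pP: "p \<in> P" for p
    proof -
      have pp: "primeideal p R" using Pj pP by (simp add: j_prime_def)
      have idp: "ideal p R" using Pid pP by blast
      have blp: "b (d - 1) \<notin> p" using Pbl pP by blast
      have enot: "e \<notin> p"
      proof
        assume "e \<in> p"
        then have "inv e \<otimes> e \<in> p" using ideal.I_l_closed[OF idp _ Units_inv_closed[OF e]] by blast
        then have "\<one> \<in> p" using e by simp
        then show False using prime_one_notin[OF pp] by blast
      qed
      have ecc: "e \<otimes> c \<in> carrier R" using ec c(1) by simp
      show ?thesis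
      proof (cases "b (length xs) \<in> p")
        case True
        then have "c \<notin> p" using c(2) pP by blast
        then have "e \<otimes> c \<notin> p" using primeideal.I_prime[OF pp ec c(1)] enot by blast
        then have nn: "e \<otimes> c \<otimes> b (d - 1) \<notin> p" using primeideal.I_prime[OF pp ecc blc] blp by blast
        show ?thesis
        proof
          assume "x \<in> p"
          then have "e \<otimes> c \<otimes> b (d - 1) \<oplus> b (length xs) \<in> p" unfolding x_def using bic ecc blc by (simp add: a_comm)
          then have "e \<otimes> c \<otimes> b (d - 1) \<in> p" using ideal_sum_cancel[OF idp _ bic True] ecc blc by simp
          then show False using nn by blast
        qed
      next
        case False
        then have "c \<in> p" using c(2) pP by blast
        then have "e \<otimes> c \<in> p" using ideal.I_l_closed[OF idp _ ec] by blast
        then have cc: "e \<otimes> c \<otimes> b (d - 1) \<in> p" using ideal.I_r_closed[OF idp _ blc] by blast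
        show ?thesis
        proof
          assume "x \<in> p"
          then have "b (length xs) \<in> p" unfolding x_def using ideal_sum_cancel[OF idp bic _ cc] ecc blc by simp
          then show False using False by blast
        qed
      qed
    qed
    have "game_inv R d b (xs @ [x])"
      unfolding game_inv_def
    proof (intro conjI allI impI)
      show "set (xs @ [x]) \<subseteq> carrier R" using xsc xc by simp
    next
      fix j assume j: "j < length (xs @ [x])"
      show "\<exists>y\<in>carrier R. (xs @ [x]) ! j = b j \<oplus> y \<otimes> b (d - 1)"
      proof (cases "j < length xs")
        case True
        then show ?thesis using xsb by (simp add: nth_append)
      next
        case False
        then have "j = length xs" using j by simp
        then show ?thesis using ec c(1) by (intro bexI[of _ "e \<otimes> c"]) (simp_all add: x_def)
      qed
    next
      fix q assume q: "j_prime R q \<and> set (xs @ [x]) \<subseteq> q \<and> b (d - 1) \<notin> q"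
      then have q1: "j_prime R q" "set xs \<subseteq> q" "b (d - 1) \<notin> q" "x \<in> q" by auto
      obtain p where pP: "p \<in> P" "p \<subseteq> q" using covP[OF q1(1-3)] by blast
      have "p \<noteq> q" using xnot[OF pP(1)] q1(4) by blast
      then have psub: "p \<subset> q" using pP(2) by blast
      have "chain_below R p (length xs)" using xsq Pj Pxs Pbl pP(1) by blast
      then obtain ch where ch: "\<forall>i\<le>length xs. j_prime R (ch i)" "\<forall>i<length xs. ch i \<subset> ch (Suc i)"
        "ch (length xs) = p" unfolding chain_below_def by blast
      define ch' where "ch' = (\<lambda>i. if i \<le> length xs then ch i else q)"
      have "chain_below R q (Suc (length xs))" unfolding chain_below_def
      proof (intro exI[of _ ch'] conjI allI impI)
        fix i assume "i \<le> Suc (length xs)"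
        then show "j_prime R (ch' i)" using ch(1) q1(1) by (simp add: ch'_def)
      next
        fix i assume i: "i < Suc (length xs)"
        show "ch' i \<subset> ch' (Suc i)"
        proof (cases "i < length xs")
          case True then show ?thesis using ch(2) by (simp add: ch'_def)
        next
          case False
          then have "i = length xs" using i by simp
          then show ?thesis using ch(3) psub by (simp add: ch'_def)
        qed
      next
        show "ch' (Suc (length xs)) = q" by (simp add: ch'_def)
      qed
      then show "chain_below R q (length (xs @ [x]))" by simp
    qed
    then show "afsr_game R d b k (xs @ [b (length xs) \<oplus> e \<otimes> c \<otimes> b (d - 1)])"
      using Suc.IH[of "xs @ [x]"] Suc.prems(1) unfolding x_def by simp
  qed (rule c(1))
qed

end

theorem lemma2:
  fixes R :: "('a, 'b) ring_scheme" and d :: nat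
  assumes "cring R"
    and "max_noetherian R"
    and "dim_max_le R (int d - 2)"
  shows "AFSR R d"
proof -
  interpret cring R by fact
  show ?thesis unfolding AFSR_def
  proof (intro allI impI)
    fix b :: "nat \<Rightarrow> 'a" assume bc: "\<forall>i<d. b i \<in> carrier R"
    have "chain_below R q 0" if "j_prime R q" for q
      unfolding chain_below_def using that by (intro exI[of _ "\<lambda>_. q"]) simp
    then have "game_inv R d b []" unfolding game_inv_def by simp
    then show "afsr_game R d b (d - 1) []" using game[OF assms(2) assms(3) bc] by simp
  qed
qed

end
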